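(* Let $\mathcal N=(\mathcal L,\mathcal I,D_{\mathcal L})$ be a network (with a general collision profile) of character $D^*$, and let $S$ be a framed schedule of frame length $T_F\ge 3D^*+1$. Then $S$ is collision free if and only if for every $k\ge0$, every link $l$ that is active in frame $k$, and every $\phi\in\mathcal I(l)$, some $l'\in\phi$ is inactive in frame $k$.
   Context: A network is a triple $\mathcal N=(\mathcal L,\mathcal I,D_{\mathcal L})$ where $\mathcal L$ is a finite nonempty set of links, each $\mathcal I(l)$ is a collection of nonempty subsets of $\mathcal L$, and $D_{\mathcal L}$ assigns an integer $D_{\mathcal L}(l,l')$ to every pair with $l'\in\phi$ for some $\phi\in\mathcal I(l)$. The character is $D^*=\max_{l}\max_{\phi\in\mathcal I(l)}\max_{l'\in\phi}|D_{\mathcal L}(l,l')|$ (0 if there are no collision sets). A schedule is a map $S:\mathcal L\times\mathbb Z\to\{0,1\}$; $S(l,t)$ has a collision if there is $\phi\in\mathcal I(l)$ with $S(l',t+D_{\mathcal L}(l,l'))=1$ for all $l'\in\phi$; $S$ is collision free if no $(l,t)$ with $S(l,t)=1$ has a collision. For an integer $T_F\ge D^*+1$, a framed schedule of frame length $T_F$ is a schedule $S$ with $S(l,t)=0$ for $t<0$, such that for every $k\ge0$ (frame $k$ consists of timeslots $kT_F,\dots,(k+1)T_F-1$) and every $l$: $S(l,kT_F+i)=0$ for $i=T_F-D^*,\dots,T_F-1$, and the values $S(l,kT_F+i)$, $i=0,\dots,T_F-D^*-1$, are all equal. Link $l$ is active in frame $k$ if these values equal 1, and inactive otherwise. *)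

theory Defs
  imports Main
begin

text \<open>A network: link set L (finite, nonempty), collision profile I, delays D.
  Schedules take values in {0,1}, represented as bool (True = 1).\<close>

definition network :: "'l set \<Rightarrow> ('l \<Rightarrow> 'l set set) \<Rightarrow> ('l \<Rightarrow> 'l \<Rightarrow> int) \<Rightarrow> bool" where
  "network L I D \<longleftrightarrow> finite L \<and> L \<noteq> {} \<and>
     (\<forall>l\<in>L. \<forall>\<phi>\<in>I l. \<phi> \<noteq> {} \<and> \<phi> \<subseteq> L)"

definition character :: "'l set \<Rightarrow> ('l \<Rightarrow> 'l set set) \<Rightarrow> ('l \<Rightarrow> 'l \<Rightarrow> int) \<Rightarrow> int" where
  "character L I D = Max (insert 0 {\<bar>D l l'\<bar> | l \<phi> l'. l \<in> L \<and> \<phi> \<in> I l \<and> l' \<in> \<phi>})"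

definition has_collision :: "('l \<Rightarrow> 'l set set) \<Rightarrow> ('l \<Rightarrow> 'l \<Rightarrow> int) \<Rightarrow> ('l \<Rightarrow> int \<Rightarrow> bool) \<Rightarrow> 'l \<Rightarrow> int \<Rightarrow> bool" where
  "has_collision I D S l t \<longleftrightarrow> (\<exists>\<phi>\<in>I l. \<forall>l'\<in>\<phi>. S l' (t + D l l'))"

definition collision_free :: "'l set \<Rightarrow> ('l \<Rightarrow> 'l set set) \<Rightarrow> ('l \<Rightarrow> 'l \<Rightarrow> int) \<Rightarrow> ('l \<Rightarrow> int \<Rightarrow> bool) \<Rightarrow> bool" where
  "collision_free L I D S \<longleftrightarrow> (\<forall>l\<in>L. \<forall>t. S l t \<longrightarrow> \<not> has_collision I D S l t)"

definition framed_schedule :: "'l set \<Rightarrow> ('l \<Rightarrow> 'l set set) \<Rightarrow> ('l \<Rightarrow> 'l \<Rightarrow> int) \<Rightarrow> int \<Rightarrow> ('l \<Rightarrow> int \<Rightarrow> bool) \<Rightarrow> bool" where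
  "framed_schedule L I D TF S \<longleftrightarrow>
     TF \<ge> character L I D + 1 \<and>
     (\<forall>l\<in>L. \<forall>t<0. \<not> S l t) \<and>
     (\<forall>k::int\<ge>0. \<forall>l\<in>L.
        (\<forall>i\<in>{TF - character L I D ..< TF}. \<not> S l (k * TF + i)) \<and>
        (\<forall>i\<in>{0 ..< TF - character L I D}. \<forall>j\<in>{0 ..< TF - character L I D}.
            S l (k * TF + i) = S l (k * TF + j)))"

definition active :: "int \<Rightarrow> int \<Rightarrow> ('l \<Rightarrow> int \<Rightarrow> bool) \<Rightarrow> 'l \<Rightarrow> int \<Rightarrow> bool" where
  "active Dstar TF S l k \<longleftrightarrow> (\<forall>i\<in>{0 ..< TF - Dstar}. S l (k * TF + i))"

end

theory Submission
  imports Defs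
begin

lemma char_bound:
  assumes "network L I D" "l \<in> L" "\<phi> \<in> I l" "l' \<in> \<phi>"
  shows "\<bar>D l l'\<bar> \<le> character L I D"
proof -
  let ?A = "{\<bar>D l l'\<bar> | l \<phi> l'. l \<in> L \<and> \<phi> \<in> I l \<and> l' \<in> \<phi>}"
  have sub: "?A \<subseteq> (\<lambda>(l,l'). \<bar>D l l'\<bar>) ` (L \<times> L)"
    using assms(1) unfolding network_def by fastforce
  have "finite L" using assms(1) unfolding network_def by simp
  hence "finite ?A" using sub finite_subset by blast
  moreover have "\<bar>D l l'\<bar> \<in> insert 0 ?A" using assms by blast
  ultimately show ?thesis unfolding character_def by (meson Max_ge finite.insertI)
qed

lemma frame_decomp:
  fixes t TF :: int assumes "TF > 0"
  shows "t = (t div TF) * TF + t mod TF \<and> 0 \<le> t mod TF \<and> t mod TF < TF"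
  using assms by (simp add: mult.commute)

theorem lemma2:
  fixes L :: "'l set" and I :: "'l \<Rightarrow> 'l set set" and D :: "'l \<Rightarrow> 'l \<Rightarrow> int"
    and TF :: int and S :: "'l \<Rightarrow> int \<Rightarrow> bool"
  assumes "network L I D"
    and "framed_schedule L I D TF S"
    and "TF \<ge> 3 * character L I D + 1"
  shows "collision_free L I D S \<longleftrightarrow>
    (\<forall>k::int\<ge>0. \<forall>l\<in>L. active (character L I D) TF S l k \<longrightarrow>
       (\<forall>\<phi>\<in>I l. \<exists>l'\<in>\<phi>. \<not> active (character L I D) TF S l' k))"
proof -
  define c where "c = character L I D"
  have c0: "c \<ge> 0"
  proof -
    let ?A = "{\<bar>D l l'\<bar> | l \<phi> l'. l \<in> L \<and> \<phi> \<in> I l \<and> l' \<in> \<phi>}"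
    have sub: "?A \<subseteq> (\<lambda>(l,l'). \<bar>D l l'\<bar>) ` (L \<times> L)"
      using assms(1) unfolding network_def by fastforce
    have "finite L" using assms(1) unfolding network_def by simp
    hence "finite ?A" using sub finite_subset by blast
    hence "0 \<le> Max (insert 0 ?A)" by (meson Max_ge finite.insertI insertI1)
    thus ?thesis unfolding c_def character_def .
  qed
  note fs = assms(2)[unfolded framed_schedule_def, folded c_def]
  have TFp: "TF > 0" using fs c0 by linarith
  have neg: "\<And>l t. l \<in> L \<Longrightarrow> t < 0 \<Longrightarrow> \<not> S l t" using fs by blast
  have tail: "\<And>k l i. k \<ge> 0 \<Longrightarrow> l \<in> L \<Longrightarrow> TF - c \<le> i \<Longrightarrow> i < TF \<Longrightarrow> \<not> S l (k*TF+i)"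
  proof -
    fix k l i assume "(k::int) \<ge> 0" "l \<in> L" "TF - c \<le> i" "i < TF"
    moreover have "\<forall>k::int\<ge>0. \<forall>l\<in>L. (\<forall>i\<in>{TF - c ..< TF}. \<not> S l (k * TF + i))" using fs by blast
    ultimately show "\<not> S l (k*TF+i)" by simp
  qed
  have eqv: "\<And>k l i j. k \<ge> 0 \<Longrightarrow> l \<in> L \<Longrightarrow> 0 \<le> i \<Longrightarrow> i < TF - c \<Longrightarrow> 0 \<le> j \<Longrightarrow> j < TF - c
     \<Longrightarrow> S l (k*TF+i) = S l (k*TF+j)"
  proof -
    fix k l i j assume "(k::int) \<ge> 0" "l \<in> L" "0 \<le> i" "i < TF - c" "0 \<le> j" "j < TF - c"
    moreover have "\<forall>k::int\<ge>0. \<forall>l\<in>L. (\<forall>i\<in>{0 ..< TF - c}. \<forall>j\<in>{0 ..< TF - c}.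
            S l (k * TF + i) = S l (k * TF + j))" using fs by blast
    ultimately show "S l (k*TF+i) = S l (k*TF+j)" by (meson atLeastLessThan_iff)
  qed
  have bnd: "\<And>l \<phi> l'. l \<in> L \<Longrightarrow> \<phi> \<in> I l \<Longrightarrow> l' \<in> \<phi> \<Longrightarrow> \<bar>D l l'\<bar> \<le> c"
    using char_bound[OF assms(1)] c_def by blast
  have phiL: "\<And>l \<phi>. l \<in> L \<Longrightarrow> \<phi> \<in> I l \<Longrightarrow> \<phi> \<subseteq> L"
    using assms(1) unfolding network_def by blast
  show ?thesis unfolding c_def[symmetric]
  proof
    assume cf: "collision_free L I D S"
    show "\<forall>k::int\<ge>0. \<forall>l\<in>L. active c TF S l k \<longrightarrow> (\<forall>\<phi>\<in>I l. \<exists>l'\<in>\<phi>. \<not> active c TF S l' k)"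
    proof (intro allI impI ballI)
      fix k :: int and l \<phi> assume k: "k \<ge> 0" and l: "l \<in> L" and act: "active c TF S l k"
        and ph: "\<phi> \<in> I l"
      show "\<exists>l'\<in>\<phi>. \<not> active c TF S l' k"
      proof (rule ccontr)
        assume "\<not> ?thesis"
        hence all: "\<forall>l'\<in>\<phi>. active c TF S l' k" by blast
        have "S l (k*TF + c)" using act assms(3) c0 unfolding active_def c_def[symmetric] by auto
        moreover have "has_collision I D S l (k*TF + c)"
          unfolding has_collision_def
        proof (rule bexI[OF _ ph], rule ballI)
          fix l' assume l': "l' \<in> \<phi>"
          have "\<bar>D l l'\<bar> \<le> c" using bnd l ph l' by blast
          hence "c + D l l' \<in> {0..<TF - c}" using assms(3) c0 unfolding c_def[symmetric] by auto
          thus "S l' (k*TF + c + D l l')" using all l' unfolding active_def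
            by (metis add.assoc)
        qed
        ultimately show False using cf l unfolding collision_free_def by blast
      qed
    qed
  next
    assume H: "\<forall>k::int\<ge>0. \<forall>l\<in>L. active c TF S l k \<longrightarrow> (\<forall>\<phi>\<in>I l. \<exists>l'\<in>\<phi>. \<not> active c TF S l' k)"
    show "collision_free L I D S" unfolding collision_free_def
    proof (intro ballI allI impI notI)
      fix l t assume l: "l \<in> L" and St: "S l t" and hc: "has_collision I D S l t"
      then obtain \<phi> where ph: "\<phi> \<in> I l" and all: "\<forall>l'\<in>\<phi>. S l' (t + D l l')"
        unfolding has_collision_def by blast
      define k where "k = t div TF"
      define i where "i = t mod TF"
      have t: "t = k*TF + i" "0 \<le> i" "i < TF" using frame_decomp[OF TFp] k_def i_def by auto
      have t0: "t \<ge> 0" using neg l St by force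
      have k0: "k \<ge> 0" using t0 TFp k_def by (simp add: pos_imp_zdiv_nonneg_iff)
      have ic: "i < TF - c" using tail[OF k0 l, of i] St t by force
      have actv: "active c TF S l' k" if l': "l' \<in> \<phi>" for l'
      proof -
        have l'L: "l' \<in> L" using phiL[OF l ph] l' by blast
        have d: "\<bar>D l l'\<bar> \<le> c" using bnd l ph l' by blast
        have S': "S l' (t + D l l')" using all l' by blast
        have "i + D l l' \<ge> 0"
        proof (rule ccontr)
          assume nn: "\<not> ?thesis"
          show False
          proof (cases "k = 0")
            case True
            then show ?thesis using neg[OF l'L, of "t + D l l'"] S' t nn by simp
          next
            case False
            hence "k - 1 \<ge> 0" using k0 by simp
            moreover have "t + D l l' = (k-1)*TF + (TF + i + D l l')" using t by (simp add: algebra_simps)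
            moreover have "TF - c \<le> TF + i + D l l'" "TF + i + D l l' < TF" using d nn t(2) by auto
            ultimately have "\<not> S l' ((k-1)*TF + (TF + i + D l l'))" using tail[OF _ l'L] by blast
            thus False using S' \<open>t + D l l' = _\<close> by simp
          qed
        qed
        moreover have "i + D l l' < TF - c"
        proof (rule ccontr)
          assume "\<not> ?thesis"
          thus False using tail[OF k0 l'L, of "i + D l l'"] S' t d ic c0 by (auto simp: algebra_simps)
        qed
        ultimately have r: "0 \<le> i + D l l'" "i + D l l' < TF - c" by auto
        have S'': "S l' (k*TF + (i + D l l'))" using S' t(1) by (simp add: add.assoc)
        show ?thesis unfolding active_def
        proof
          fix j assume "j \<in> {0..<TF - c}"
          hence "0 \<le> j" "j < TF - c" by auto
          thus "S l' (k*TF + j)" using eqv[OF k0 l'L r(1) r(2)] S'' by blast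
        qed
      qed
      have St': "S l (k*TF + i)" using St t(1) by simp
      have "active c TF S l k" unfolding active_def
      proof
        fix j assume "j \<in> {0..<TF - c}"
        hence "0 \<le> j" "j < TF - c" by auto
        thus "S l (k*TF + j)" using eqv[OF k0 l t(2) ic] St' by blast
      qed
      thus False using H k0 l ph actv by blast
    qed
  qed
qed

end
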